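(* Let $c$ be a real number with $0<c\leq 1/2$. There exists a sequence $(a_p)$ indexed by the prime numbers $p$, with each $a_p$ an integer satisfying $0\leq a_p<p$, such that for almost every $x\in[0,1]$ (with respect to Lebesgue measure), the set of primes $p$ with $$\Bigl|x-\frac{a_p}{p}\Bigr|\leq \frac{c}{p}$$ is infinite. *)

theory Defs
  imports "HOL-Analysis.Analysis" "HOL-Computational_Algebra.Primes"
begin

end

theory Submission
  imports Defs "HOL-Computational_Algebra.Squarefree"
begin


definition PS :: "nat \<Rightarrow> nat \<Rightarrow> real" where
  "PS N M = (\<Sum>p\<in>{p. prime p \<and> N \<le> p \<and> p < M}. 1 / real p)"

lemma card_multiples_le:
  assumes "(p::nat) > 0"
  shows "card {n\<in>{1..X}. p dvd n} \<le> X div p"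
proof -
  have "{n\<in>{1..X}. p dvd n} \<subseteq> (\<lambda>k. p*k) ` {1..X div p}"
  proof
    fix n assume "n \<in> {n\<in>{1..X}. p dvd n}"
    then obtain k where k: "n = p * k" "1 \<le> n" "n \<le> X" by auto
    then have "k \<ge> 1" by (cases k) auto
    moreover have "k \<le> X div p" using k assms
      by (metis div_le_mono mult.commute nonzero_mult_div_cancel_right not_gr0)
    ultimately show "n \<in> (\<lambda>k. p*k) ` {1..X div p}" using k by auto
  qed
  then have "card {n\<in>{1..X}. p dvd n} \<le> card ((\<lambda>k. p*k) ` {1..X div p})"
    by (intro card_mono) auto
  also have "\<dots> \<le> card {1..X div p}" by (rule card_image_le) auto
  finally show ?thesis by simp
qed

lemma erdos_half:
  assumes N: "N \<ge> 1"
  shows "\<exists>M. 1/2 \<le> PS N M"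
proof (rule ccontr)
  assume H: "\<not> (\<exists>M. 1/2 \<le> PS N M)"
  define X :: nat where "X = 4^(N+1)"
  define S where "S = {1..X}"
  define A where "A = {n\<in>S. \<exists>p. prime p \<and> N \<le> p \<and> p dvd n}"
  define B where "B = S - A"
  define P where "P = {p. prime p \<and> N \<le> p \<and> p < X+1}"
  have finP: "finite P" unfolding P_def by (rule finite_subset[of _ "{..<X+1}"]) auto
  have "A \<subseteq> (\<Union>p\<in>P. {n\<in>{1..X}. p dvd n})"
  proof
    fix n assume "n \<in> A"
    then obtain p where p: "prime p" "N \<le> p" "p dvd n" "n \<in> {1..X}" unfolding A_def S_def by auto
    then have "p \<le> X" using dvd_imp_le[of p n] by auto
    then show "n \<in> (\<Union>p\<in>P. {n\<in>{1..X}. p dvd n})" using p unfolding P_def by auto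
  qed
  then have "card A \<le> card (\<Union>p\<in>P. {n\<in>{1..X}. p dvd n})"
    by (intro card_mono finite_UN_I finP) auto
  also have "\<dots> \<le> (\<Sum>p\<in>P. card {n\<in>{1..X}. p dvd n})" by (rule card_UN_le[OF finP])
  finally have cA: "real (card A) \<le> (\<Sum>p\<in>P. real (card {n\<in>{1..X}. p dvd n}))"
    by (metis of_nat_le_iff of_nat_sum)
  also have "\<dots> \<le> (\<Sum>p\<in>P. real X * (1 / real p))"
  proof (rule sum_mono)
    fix p assume "p \<in> P"
    then have "p > 0" unfolding P_def using prime_gt_0_nat by auto
    then have "real (card {n\<in>{1..X}. p dvd n}) \<le> real (X div p)"
      using card_multiples_le by auto
    also have "\<dots> \<le> real X / real p" by (rule of_nat_div_le_of_nat)
    finally show "real (card {n\<in>{1..X}. p dvd n}) \<le> real X * (1 / real p)" by simp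
  qed
  also have "\<dots> = real X * PS N (X+1)" unfolding PS_def P_def by (simp add: sum_distrib_left)
  also have "\<dots> < real X * (1/2)" using H by (intro mult_strict_left_mono) (auto simp: X_def not_le)
  finally have cA2: "real (card A) < real X / 2" by simp
  define g where "g n = (prime_factors (squarefree_part n), square_part n)" for n :: nat
  have inj: "inj_on g B"
  proof (rule inj_onI)
    fix m n assume m: "m \<in> B" and n: "n \<in> B" and e: "g m = g n"
    have sq: "square_part m = square_part n" using e unfolding g_def by auto
    have pf: "prime_factors (squarefree_part m) = prime_factors (squarefree_part n)"
      using e unfolding g_def by auto
    have mult: "multiplicity q (squarefree_part k) = (if q \<in> prime_factors (squarefree_part k) then 1 else 0)"
      if "prime q" for q k :: nat
      using prime_multiplicity_squarefree_part_le_Suc_0[OF that, of k] that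
      unfolding prime_factors_multiplicity by auto
    have "normalize (squarefree_part m) = normalize (squarefree_part n)"
      by (rule multiplicity_eq_imp_eq) (auto simp: mult pf)
    then have "squarefree_part m = squarefree_part n" by simp
    then show "m = n" using sq squarefree_decomposition_unique by blast
  qed
  have img: "g ` B \<subseteq> Pow {..<N} \<times> {1..2^(N+1)}"
  proof
    fix y assume "y \<in> g ` B"
    then obtain n where n: "n \<in> B" "y = g n" by auto
    then have n1: "1 \<le> n" "n \<le> X" and nA: "n \<notin> A" unfolding B_def S_def by auto
    have "prime_factors (squarefree_part n) \<subseteq> {..<N}"
    proof
      fix p assume p: "p \<in> prime_factors (squarefree_part n)"
      then have "prime p" "p dvd squarefree_part n" by (auto simp: in_prime_factors_iff)
      moreover have "squarefree_part n dvd n" by (metis dvd_triv_left squarefree_decompose)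
      ultimately have "prime p" "p dvd n" using dvd_trans by blast+
      then show "p \<in> {..<N}" using nA n1 unfolding A_def S_def by (auto simp: not_le)
    qed
    moreover have "square_part n \<ge> 1" using n1 square_part_0_iff[of n]
      by (metis less_one not_le le_zero_eq)
    moreover have "square_part n ^ 2 \<le> (2^(N+1))^2"
    proof -
      have "square_part n ^ 2 \<le> n" using n1 by (intro dvd_imp_le) auto
      also have "\<dots> \<le> (2^(N+1))^2" using n1 unfolding X_def
        by (simp add: power2_eq_square power_mult_distrib[symmetric])
      finally show ?thesis .
    qed
    then have "square_part n \<le> 2^(N+1)" by (rule power2_le_imp_le) auto
    ultimately show "y \<in> Pow {..<N} \<times> {1..2^(N+1)}" using n by (auto simp: g_def)
  qed
  have "card B = card (g ` B)" using inj by (simp add: card_image)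
  also have "\<dots> \<le> card (Pow {..<N} \<times> {1..2^(N+1)::nat})" by (intro card_mono img) auto
  also have "\<dots> = 2^N * 2^(N+1)" by (simp add: card_cartesian_product card_Pow)
  finally have cB: "card B \<le> 2^N * 2^(N+1)" .
  have "S = A \<union> B" unfolding B_def A_def by auto
  then have "card S \<le> card A + card B" by (metis card_Un_le)
  moreover have "card S = X" unfolding S_def by simp
  moreover have "X = 2 * (2^N * 2^(N+1))" unfolding X_def
    by (simp add: power2_eq_square power_mult_distrib[symmetric] power_add[symmetric])
  ultimately have "X \<le> card A + X div 2"
    using cB by linarith
  then have "real X \<le> real (card A) + real (X div 2)" by linarith
  then have "real X \<le> real (card A) + real X / 2" using of_nat_div_le_of_nat[of X 2] by linarith
  then show False using cA2 by linarith
qed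



lemma PS_empty: "M \<le> N \<Longrightarrow> PS N M = 0"
  unfolding PS_def by (rule sum.neutral) auto

lemma PS_step:
  assumes "N < M"
  shows "PS N M = (if prime N then 1 / real N else 0) + PS (Suc N) M"
proof -
  have fin: "finite {p. prime p \<and> Suc N \<le> p \<and> p < M}"
    by (rule finite_subset[of _ "{..<M}"]) auto
  show ?thesis
  proof (cases "prime N")
    case True
    then have "{p. prime p \<and> N \<le> p \<and> p < M} = insert N {p. prime p \<and> Suc N \<le> p \<and> p < M}"
      using assms by auto
    then show ?thesis unfolding PS_def using True fin by simp
  next
    case False
    then have "{p. prime p \<and> N \<le> p \<and> p < M} = {p. prime p \<and> Suc N \<le> p \<and> p < M}"
      using assms by (auto simp: le_eq_less_or_eq)
    then show ?thesis unfolding PS_def using False by simp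
  qed
qed

lemma PS_split:
  assumes "N \<le> M1" "M1 \<le> M2"
  shows "PS N M2 = PS N M1 + PS M1 M2"
proof -
  have "{p. prime p \<and> N \<le> p \<and> p < M2} = {p. prime p \<and> N \<le> p \<and> p < M1} \<union> {p. prime p \<and> M1 \<le> p \<and> p < M2}"
    using assms by auto
  moreover have "finite {p. prime p \<and> N \<le> p \<and> p < M1}" "finite {p. prime p \<and> M1 \<le> p \<and> p < M2}"
    using assms by (auto intro: finite_subset[of _ "{..<M2}"])
  ultimately show ?thesis unfolding PS_def
    by (subst sum.union_disjoint[symmetric]) auto
qed

lemma PS_nonneg: "PS N M \<ge> 0"
  unfolding PS_def by (rule sum_nonneg) auto

lemma PS_diverge:
  assumes "N \<ge> 1"
  shows "\<exists>M\<ge>N. T \<le> PS N M"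
proof -
  have "\<forall>N\<ge>1. \<exists>M\<ge>N. real n / 2 \<le> PS N M" for n
  proof (induction n)
    case 0 then show ?case using PS_nonneg by auto
  next
    case (Suc n)
    show ?case
    proof (intro allI impI)
      fix N :: nat assume N: "N \<ge> 1"
      obtain M1 where M1: "M1 \<ge> N" "real n / 2 \<le> PS N M1" using Suc N by blast
      obtain M2 where M2: "1/2 \<le> PS M1 M2" using erdos_half[of M1] M1 N by auto
      have "M1 \<le> M2" using M2 PS_empty[of M2 M1] by (cases "M1 \<le> M2") auto
      then have "PS N M2 = PS N M1 + PS M1 M2" using PS_split M1 by blast
      then show "\<exists>M\<ge>N. real (Suc n) / 2 \<le> PS N M" using M1 M2 \<open>M1 \<le> M2\<close>
        by (intro exI[of _ M2]) auto
    qed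
  qed
  moreover obtain n :: nat where "2 * T \<le> real n" using real_arch_simple by blast
  moreover have "T \<le> real n / 2" using \<open>2 * T \<le> real n\<close> by linarith
  ultimately show ?thesis using assms by (meson order_trans)
qed



definition Cov :: "real \<Rightarrow> (nat \<Rightarrow> int) \<Rightarrow> nat \<Rightarrow> nat \<Rightarrow> real set" where
  "Cov c a N M = {x. \<exists>p. prime p \<and> N \<le> p \<and> p < M \<and> \<bar>x - real_of_int (a p) / real p\<bar> \<le> c / real p}"

definition valid :: "(nat \<Rightarrow> int) \<Rightarrow> bool" where
  "valid a \<longleftrightarrow> (\<forall>p. prime p \<longrightarrow> 0 \<le> a p \<and> a p < int p)"

definition UL :: "(real \<times> real) list \<Rightarrow> real set" where
  "UL Ls = (\<Union>(u,v)\<in>set Ls. {u..v})"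

definition lenL :: "(real \<times> real) list \<Rightarrow> real" where
  "lenL Ls = sum_list (map (\<lambda>(u,v). v - u) Ls)"

definition okL :: "(real \<times> real) list \<Rightarrow> bool" where
  "okL Ls \<longleftrightarrow> (\<forall>(u,v)\<in>set Ls. 0 \<le> u \<and> u \<le> v \<and> v \<le> 1)"

lemma UL_Cons: "UL ((u,v)#Ls) = {u..v} \<union> UL Ls" by (simp add: UL_def)

lemma valid0: "valid (\<lambda>_. 0)" unfolding valid_def by (auto simp: prime_gt_0_nat)

lemma Cov_mono:
  assumes "N' \<le> N" "M \<le> M'" shows "Cov c a N M \<subseteq> Cov c a N' M'"
proof
  fix x assume "x \<in> Cov c a N M"
  then obtain p where p: "prime p" "N \<le> p" "p < M" "\<bar>x - real_of_int (a p) / real p\<bar> \<le> c / real p"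
    unfolding Cov_def by blast
  have "N' \<le> p" "p < M'" using p(2,3) assms by linarith+
  then show "x \<in> Cov c a N' M'" unfolding Cov_def using p(1,4) by blast
qed

lemma Cov_cong: assumes "\<And>p. N \<le> p \<Longrightarrow> p < M \<Longrightarrow> a p = b p" shows "Cov c a N M = Cov c b N M"
proof -
  have "(\<exists>p. prime p \<and> N \<le> p \<and> p < M \<and> \<bar>x - real_of_int (a p) / real p\<bar> \<le> c / real p) \<longleftrightarrow>
        (\<exists>p. prime p \<and> N \<le> p \<and> p < M \<and> \<bar>x - real_of_int (b p) / real p\<bar> \<le> c / real p)" for x
    using assms by metis
  then show ?thesis unfolding Cov_def by blast
qed

lemma cell_aux:
  fixes c :: real
  assumes c: "0 < c" "c \<le> 1/2"
  shows "M - N = k \<Longrightarrow> N \<ge> 1 \<Longrightarrow> 0 \<le> u \<Longrightarrow> u \<le> v \<Longrightarrow> v \<le> 1 \<Longrightarrow> v - u \<le> 2*c*PS N M \<Longrightarrow>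
    \<exists>a Ls. valid a \<and> okL Ls \<and> {u..v} - Cov c a N M \<subseteq> UL Ls \<and> lenL Ls \<le> (v-u)/(1+2*c) + 2/real N"
proof (induction k arbitrary: N u)
  case 0
  then have "PS N M = 0" by (intro PS_empty) auto
  then have "u = v" using 0 c by auto
  then show ?case using 0
    by (intro exI[of _ "\<lambda>_. 0"] exI[of _ "[(u,v)]"]) (auto simp: valid0 okL_def UL_def lenL_def)
next
  case (Suc k)
  have NM: "N < M" and k: "M - Suc N = k" using Suc.prems by auto
  have ps: "PS N M = (if prime N then 1 / real N else 0) + PS (Suc N) M" using PS_step[OF NM] .
  have N2: "2 / real (Suc N) \<le> 2 / real N" using Suc.prems by (intro divide_left_mono) auto
  show ?case
  proof (cases "prime N")
    case False
    have "v - u \<le> 2*c*PS (Suc N) M" using Suc.prems(6) ps False by simp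
    then have "\<exists>a Ls. valid a \<and> okL Ls \<and> {u..v} - Cov c a (Suc N) M \<subseteq> UL Ls \<and>
       lenL Ls \<le> (v-u)/(1+2*c) + 2/real (Suc N)"
      using Suc.IH[OF k, of u] Suc.prems(2-5) by simp
    then obtain a Ls where H: "valid a" "okL Ls" "{u..v} - Cov c a (Suc N) M \<subseteq> UL Ls"
       "lenL Ls \<le> (v-u)/(1+2*c) + 2/real (Suc N)" by blast
    have "Cov c a (Suc N) M \<subseteq> Cov c a N M" by (rule Cov_mono) auto
    then show ?thesis using H N2 by (intro exI[of _ a] exI[of _ Ls]) auto
  next
    case True
    define p where "p = N"
    have p2: "real p \<ge> 2" using True prime_ge_2_nat unfolding p_def by auto
    show ?thesis
    proof (cases "v - u \<le> (1+2*c)/real p")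
      case True
      have "(1+2*c)/real p \<le> 2/real p" using c p2 by (intro divide_right_mono) auto
      then have "(v - u) \<le> 2 / real p" using True by linarith
      moreover have "0 \<le> (v-u)/(1+2*c)" using Suc.prems c by auto
      ultimately show ?thesis using Suc.prems unfolding p_def
        by (intro exI[of _ "\<lambda>_. 0"] exI[of _ "[(u,v)]"]) (auto simp: valid0 okL_def UL_def lenL_def)
    next
      case False
      then have far: "u + (1+2*c)/real p < v" by auto
      define a0 :: int where "a0 = \<lceil>real p * u + c\<rceil>"
      define l where "l = (real_of_int a0 - c) / real p"
      define r where "r = (real_of_int a0 + c) / real p"
      have a0: "real p * u + c \<le> a0" "a0 < real p * u + c + 1" unfolding a0_def
        by linarith+
      have pu: "(real p * u) / real p = u" "(real p * u + 1) / real p = u + 1/real p"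
        using p2 by (simp_all add: field_simps)
      have "(real p * u) / real p \<le> (real_of_int a0 - c) / real p"
        using a0 p2 by (intro divide_right_mono) auto
      then have ul: "u \<le> l" unfolding l_def using pu by simp
      have "(real_of_int a0 - c) / real p < (real p * u + 1) / real p"
        using a0 p2 by (intro divide_strict_right_mono) auto
      then have lu: "l < u + 1/real p" unfolding l_def using pu by simp
      have rl: "r = l + 2*c/real p" unfolding r_def l_def using p2 by (simp add: field_simps)
      have rv: "r < v" using far lu rl by (simp add: add_divide_distrib) 
      have "v - r \<le> 2*c*PS (Suc N) M"
      proof -
        have "v - r \<le> v - u - 2*c/real p" using rl ul by linarith
        also have "\<dots> \<le> 2*c*PS N M - 2*c/real p" using Suc.prems by linarith
        also have "\<dots> = 2*c*PS (Suc N) M" using ps \<open>prime N\<close> unfolding p_def by (simp add: algebra_simps)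
        finally show ?thesis .
      qed
      moreover have "0 \<le> r" using rl ul Suc.prems c p2 by (smt (verit) divide_nonneg_nonneg)
      ultimately have "\<exists>a Ls. valid a \<and> okL Ls \<and> {r..v} - Cov c a (Suc N) M \<subseteq> UL Ls \<and>
       lenL Ls \<le> (v-r)/(1+2*c) + 2/real (Suc N)"
        using Suc.IH[OF k, of r] Suc.prems(2,5) rv by simp
      then obtain a' Ls' where H: "valid a'" "okL Ls'" "{r..v} - Cov c a' (Suc N) M \<subseteq> UL Ls'"
        "lenL Ls' \<le> (v-r)/(1+2*c) + 2/real (Suc N)" by blast
      define a where "a = a'(p := a0)"
      have "0 \<le> real p * u" using Suc.prems p2 by simp
      then have "0 < real_of_int a0" using a0 c by linarith
      then have a0pos: "0 \<le> a0" by simp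
      have "real_of_int a0 + c = real p * r" unfolding r_def using p2 by simp
      also have "\<dots> < real p * 1" using rv Suc.prems p2 by (intro mult_strict_left_mono) auto
      finally have a0p: "a0 < int p" using c by linarith
      have va: "valid a" using H(1) a0pos a0p unfolding valid_def a_def by auto
      have "0 < 2*c/real p" using c p2 by simp
      then have "l \<le> 1" using rl rv Suc.prems by linarith
      then have ok: "okL ((u,l) # Ls')" using H(2) Suc.prems ul unfolding okL_def by auto
      have eqC: "Cov c a (Suc N) M = Cov c a' (Suc N) M"
        by (rule Cov_cong) (auto simp: a_def p_def)
      have cover: "{u..v} - Cov c a N M \<subseteq> UL ((u,l) # Ls')"
      proof
        fix x assume x: "x \<in> {u..v} - Cov c a N M"
        then have nx: "x \<notin> Cov c a' (Suc N) M" using eqC Cov_mono[of N "Suc N" M M c a] by auto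
        have "\<not> \<bar>x - real_of_int (a p) / real p\<bar> \<le> c / real p"
          using x \<open>prime N\<close> NM unfolding Cov_def p_def by auto
        then have "\<bar>x - real_of_int a0 / real p\<bar> > c / real p" unfolding a_def by simp
        moreover have "l = real_of_int a0 / real p - c / real p" "r = real_of_int a0 / real p + c / real p"
          unfolding l_def r_def by (simp_all add: diff_divide_distrib add_divide_distrib)
        ultimately have "x < l \<or> x > r" by (cases "x - real_of_int a0 / real p \<ge> 0") auto
        then show "x \<in> UL ((u,l) # Ls')"
        proof
          assume "x < l" then show ?thesis using x unfolding UL_def by auto
        next
          assume "x > r" then have "x \<in> {r..v} - Cov c a' (Suc N) M" using x nx by auto
          then have "x \<in> UL Ls'" using H(3) by blast
          then show ?thesis by (simp add: UL_Cons)
        qed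
      qed
      have "l - u \<le> (r - u)/(1+2*c)"
      proof -
        have "2*c*(l-u) \<le> 2*c*(1/real p)" using lu c by (intro mult_left_mono) auto
        then have "2*c*(l-u) \<le> 2*c/real p" by simp
        then have "(l-u)*(1+2*c) \<le> r - u" using rl by (simp add: algebra_simps)
        then show ?thesis using c by (simp add: field_simps)
      qed
      then have "lenL ((u,l) # Ls') \<le> (r - u)/(1+2*c) + (v-r)/(1+2*c) + 2/real N"
        using H(4) N2 unfolding lenL_def by simp
      also have "\<dots> = (v-u)/(1+2*c) + 2/real N" by (simp add: add_divide_distrib[symmetric])
      finally show ?thesis using va ok cover by blast
    qed
  qed
qed


lemma UL_append: "UL (A @ B) = UL A \<union> UL B" by (auto simp: UL_def)
lemma lenL_append: "lenL (A @ B) = lenL A + lenL B" by (simp add: lenL_def)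
lemma lenL_Cons: "lenL ((u,v) # Ls) = (v - u) + lenL Ls" by (simp add: lenL_def)
lemma okL_append: "okL (A @ B) \<longleftrightarrow> okL A \<and> okL B" by (auto simp: okL_def)
lemma okL_Cons: "okL ((u,v) # Ls) \<longleftrightarrow> (0 \<le> u \<and> u \<le> v \<and> v \<le> 1) \<and> okL Ls" by (auto simp: okL_def)

lemma UL_meas: "okL Ls \<Longrightarrow> UL Ls \<in> sets lebesgue \<and> UL Ls \<subseteq> {0..1} \<and> measure lebesgue (UL Ls) \<le> lenL Ls"
proof (induction Ls)
  case Nil then show ?case by (simp add: UL_def lenL_def)
next
  case (Cons uv Ls)
  obtain u v where uv: "uv = (u,v)" by fastforce
  have h: "0 \<le> u" "u \<le> v" "v \<le> 1" "okL Ls" using Cons.prems uv by (auto simp: okL_Cons)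
  have I: "UL Ls \<in> sets lebesgue" "UL Ls \<subseteq> {0..1}" "measure lebesgue (UL Ls) \<le> lenL Ls"
    using Cons.IH h(4) by auto
  have Iv: "{u..v} \<in> sets lebesgue" by simp
  have "measure lebesgue ({u..v} \<union> UL Ls) \<le> measure lebesgue {u..v} + measure lebesgue (UL Ls)"
    by (rule measure_Un_le[OF Iv I(1)])
  also have "\<dots> \<le> (v - u) + lenL Ls" using I(3) h by simp
  finally show ?case using I Iv h uv by (auto simp: UL_Cons lenL_Cons)
qed

lemma pass:
  fixes c :: real
  assumes c: "0 < c" "c \<le> 1/2"
  shows "okL Ls \<Longrightarrow> N \<ge> 1 \<Longrightarrow> \<eta> > 0 \<Longrightarrow> \<exists>M a Ls'. N \<le> M \<and> valid a \<and> okL Ls' \<and>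
     UL Ls - Cov c a N M \<subseteq> UL Ls' \<and> lenL Ls' \<le> lenL Ls / (1+2*c) + \<eta>"
proof (induction Ls arbitrary: N \<eta>)
  case Nil
  then show ?case
    by (intro exI[of _ N] exI[of _ "\<lambda>_. 0"] exI[of _ "[]"]) (auto simp: valid0 okL_def UL_def lenL_def)
next
  case (Cons uv Ls)
  obtain u v where uv: "uv = (u,v)" by fastforce
  have h: "0 \<le> u" "u \<le> v" "v \<le> 1" "okL Ls" using Cons.prems uv by (auto simp: okL_Cons)
  obtain n :: nat where n: "4 / \<eta> < real n" using reals_Archimedean2 by blast
  define N1 where "N1 = max N n"
  have N1: "N \<le> N1" "1 \<le> N1" "4 / \<eta> < real N1" using n Cons.prems unfolding N1_def by auto
  have "4 < \<eta> * real N1" using N1(3) Cons.prems by (simp add: field_simps)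
  then have N1e: "2 / real N1 \<le> \<eta> / 2" using N1(2) by (simp add: field_simps)
  obtain M1 where M1: "M1 \<ge> N1" "(v - u) / (2*c) \<le> PS N1 M1" using PS_diverge[OF N1(2)] by blast
  have "v - u \<le> 2*c*PS N1 M1" using M1(2) c by (simp add: field_simps)
  then obtain a1 L1 where A1: "valid a1" "okL L1" "{u..v} - Cov c a1 N1 M1 \<subseteq> UL L1"
     "lenL L1 \<le> (v-u)/(1+2*c) + 2/real N1"
    using cell_aux[OF c, where M=M1 and N=N1 and u=u and v=v and k="M1-N1"] N1 h by blast
  have "M1 \<ge> 1" using M1 N1 by simp
  then obtain M a2 L2 where A2: "M1 \<le> M" "valid a2" "okL L2" "UL Ls - Cov c a2 M1 M \<subseteq> UL L2"
     "lenL L2 \<le> lenL Ls / (1+2*c) + \<eta>/2"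
    using Cons.IH[OF h(4), of M1 "\<eta>/2"] Cons.prems by auto
  define a where "a p = (if p < M1 then a1 p else a2 p)" for p
  have va: "valid a" using A1(1) A2(2) unfolding valid_def a_def by auto
  have C1: "Cov c a1 N1 M1 \<subseteq> Cov c a N M"
  proof -
    have "Cov c a1 N1 M1 = Cov c a N1 M1" by (rule Cov_cong) (auto simp: a_def)
    also have "\<dots> \<subseteq> Cov c a N M" using N1 A2 by (intro Cov_mono) auto
    finally show ?thesis .
  qed
  have C2: "Cov c a2 M1 M \<subseteq> Cov c a N M"
  proof -
    have "Cov c a2 M1 M = Cov c a M1 M" by (rule Cov_cong) (auto simp: a_def)
    also have "\<dots> \<subseteq> Cov c a N M" using N1 M1 by (intro Cov_mono) auto
    finally show ?thesis .
  qed
  have cov: "UL (uv # Ls) - Cov c a N M \<subseteq> UL (L1 @ L2)"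
    using A1(3) A2(4) C1 C2 uv by (auto simp: UL_Cons UL_append)
  have "lenL (L1 @ L2) \<le> (v-u)/(1+2*c) + lenL Ls / (1+2*c) + \<eta>"
    using A1(4) A2(5) N1e by (simp add: lenL_append)
  also have "\<dots> = lenL (uv # Ls) / (1+2*c) + \<eta>" using uv by (simp add: lenL_Cons add_divide_distrib)
  finally show ?case using va cov A1(2) A2(3) N1 M1 A2(1)
    by (intro exI[of _ M] exI[of _ a] exI[of _ "L1 @ L2"]) (auto simp: okL_append)
qed

lemma iter:
  fixes c :: real
  assumes c: "0 < c" "c \<le> 1/2"
  shows "N \<ge> 1 \<Longrightarrow> \<eta> > 0 \<Longrightarrow> \<exists>M a Ls. N \<le> M \<and> valid a \<and> okL Ls \<and>
     {0..1} - Cov c a N M \<subseteq> UL Ls \<and> lenL Ls \<le> (1/(1+2*c))^k + \<eta>"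
proof (induction k arbitrary: N \<eta>)
  case 0
  then show ?case
    by (intro exI[of _ N] exI[of _ "\<lambda>_. 0"] exI[of _ "[(0,1)]"]) (auto simp: valid0 okL_def UL_def lenL_def)
next
  case (Suc k)
  obtain M1 a1 L1 where A1: "N \<le> M1" "valid a1" "okL L1" "{0..1} - Cov c a1 N M1 \<subseteq> UL L1"
     "lenL L1 \<le> (1/(1+2*c))^k + \<eta>/2"
    using Suc.IH[of N "\<eta>/2"] Suc.prems by auto
  have "M1 \<ge> 1" using A1 Suc.prems by simp
  then obtain M a2 L2 where A2: "M1 \<le> M" "valid a2" "okL L2" "UL L1 - Cov c a2 M1 M \<subseteq> UL L2"
     "lenL L2 \<le> lenL L1 / (1+2*c) + \<eta>/2"
    using pass[OF c A1(3), of M1 "\<eta>/2"] Suc.prems by auto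
  define a where "a p = (if p < M1 then a1 p else a2 p)" for p
  have va: "valid a" using A1(2) A2(2) unfolding valid_def a_def by auto
  have C1: "Cov c a1 N M1 \<subseteq> Cov c a N M"
  proof -
    have "Cov c a1 N M1 = Cov c a N M1" by (rule Cov_cong) (auto simp: a_def)
    also have "\<dots> \<subseteq> Cov c a N M" using A2 by (intro Cov_mono) auto
    finally show ?thesis .
  qed
  have C2: "Cov c a2 M1 M \<subseteq> Cov c a N M"
  proof -
    have "Cov c a2 M1 M = Cov c a M1 M" by (rule Cov_cong) (auto simp: a_def)
    also have "\<dots> \<subseteq> Cov c a N M" using A1 by (intro Cov_mono) auto
    finally show ?thesis .
  qed
  have cov: "{0..1} - Cov c a N M \<subseteq> UL L2" using A1(4) A2(4) C1 C2 by blast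
  have pos: "0 < 1 + 2*c" using c by simp
  have "lenL L1 / (1+2*c) \<le> ((1/(1+2*c))^k + \<eta>/2) / (1+2*c)"
    using A1(5) pos by (intro divide_right_mono) auto
  also have "\<dots> = (1/(1+2*c))^(Suc k) + (\<eta>/2) / (1+2*c)" by (simp add: add_divide_distrib)
  also have "(\<eta>/2) / (1+2*c) \<le> \<eta>/2" using Suc.prems c by (simp add: field_simps)
  finally have "lenL L2 \<le> (1/(1+2*c))^(Suc k) + \<eta>" using A2(5) by linarith
  then show ?case using va cov A2(3) A1(1) A2(1)
    by (intro exI[of _ M] exI[of _ a] exI[of _ L2]) auto
qed

lemma round:
  fixes c :: real
  assumes c: "0 < c" "c \<le> 1/2" and N: "N \<ge> 1" and e: "\<epsilon> > 0"
  shows "\<exists>M a Ls. N < M \<and> valid a \<and> okL Ls \<and> {0..1} - Cov c a N M \<subseteq> UL Ls \<and> lenL Ls \<le> \<epsilon>"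
proof -
  have "1/(1+2*c) < 1" using c by simp
  then obtain k where k: "(1/(1+2*c))^k < \<epsilon>/2" using real_arch_pow_inv[of "\<epsilon>/2"] e by auto
  obtain M a Ls where A: "N \<le> M" "valid a" "okL Ls" "{0..1} - Cov c a N M \<subseteq> UL Ls"
     "lenL Ls \<le> (1/(1+2*c))^k + \<epsilon>/2"
    using iter[OF c N, of "\<epsilon>/2" k] e by auto
  have "Cov c a N M \<subseteq> Cov c a N (max M (N+1))" by (rule Cov_mono) auto
  then show ?thesis using A k
    by (intro exI[of _ "max M (N+1)"] exI[of _ a] exI[of _ Ls]) auto
qed


theorem theorem1p1:
  fixes c :: real
  assumes "0 < c" and "c \<le> 1/2"
  shows "\<exists>a :: nat \<Rightarrow> int. (\<forall>p. prime p \<longrightarrow> 0 \<le> a p \<and> a p < int p) \<and>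
           (AE x in lborel. x \<in> {0..1} \<longrightarrow>
              infinite {p :: nat. prime p \<and> \<bar>x - real_of_int (a p) / real p\<bar> \<le> c / real p})"
proof -
  note c = assms
  define Q where "Q = (\<lambda>(z::nat \<times> nat) (t::nat \<times> (nat \<Rightarrow> int) \<times> (real \<times> real) list).
     fst z \<ge> 1 \<longrightarrow> fst z < fst t \<and> valid (fst (snd t)) \<and> okL (snd (snd t)) \<and>
     {0..1} - Cov c (fst (snd t)) (fst z) (fst t) \<subseteq> UL (snd (snd t)) \<and>
     lenL (snd (snd t)) \<le> 1 / real (Suc (snd z)))"
  have "\<forall>z. \<exists>t. Q z t"
  proof
    fix z :: "nat \<times> nat"
    obtain N r where z: "z = (N, r)" by fastforce
    show "\<exists>t. Q z t"
    proof (cases "N \<ge> 1")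
      case True
      obtain M a Ls where "N < M \<and> valid a \<and> okL Ls \<and> {0..1} - Cov c a N M \<subseteq> UL Ls \<and> lenL Ls \<le> 1 / real (Suc r)"
        using round[OF c True, of "1 / real (Suc r)"] by auto
      then show ?thesis unfolding Q_def z by (intro exI[of _ "(M, a, Ls)"]) auto
    next
      case False
      then show ?thesis unfolding Q_def z by auto
    qed
  qed
  then have "\<exists>F. \<forall>z. Q z (F z)" by (rule choice)
  then obtain F where F0: "\<forall>z. Q z (F z)" by blast
  have F: "Q z (F z)" for z using F0 by blast
  define Nseq where "Nseq = rec_nat 1 (\<lambda>r N. fst (F (N, r)))"
  have Ns0: "Nseq 0 = 1" and NsS: "\<And>r. Nseq (Suc r) = fst (F (Nseq r, r))" unfolding Nseq_def by simp_all
  define A where "A r = fst (snd (F (Nseq r, r)))" for r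
  define L where "L r = snd (snd (F (Nseq r, r)))" for r
  have N1: "Nseq r \<ge> 1" for r
  proof (induction r)
    case 0 then show ?case using Ns0 by simp
  next
    case (Suc r)
    then have "Nseq r < Nseq (Suc r)" using F[of "(Nseq r, r)"] NsS unfolding Q_def by auto
    then show ?case using Suc by simp
  qed
  have P: "Nseq r < Nseq (Suc r) \<and> valid (A r) \<and> okL (L r) \<and>
       {0..1} - Cov c (A r) (Nseq r) (Nseq (Suc r)) \<subseteq> UL (L r) \<and> lenL (L r) \<le> 1 / real (Suc r)" for r
    using F[of "(Nseq r, r)"] N1[of r] unfolding Q_def A_def L_def NsS by auto
  have sm: "strict_mono Nseq" using P by (simp add: strict_mono_Suc_iff)
  have Nge: "r \<le> Nseq r" for r using strict_mono_imp_increasing[OF sm] .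
  define rd where "rd p = (LEAST r. p < Nseq (Suc r))" for p
  define a where "a p = A (rd p) p" for p
  have rd: "rd p = r" if "Nseq r \<le> p" "p < Nseq (Suc r)" for p r
    unfolding rd_def
  proof (rule Least_equality)
    show "p < Nseq (Suc r)" by fact
  next
    fix y assume y: "p < Nseq (Suc y)"
    show "r \<le> y"
    proof (rule ccontr)
      assume "\<not> r \<le> y"
      then have "Suc y \<le> r" by simp
      then have "Nseq (Suc y) \<le> Nseq r" using sm by (simp add: strict_mono_less_eq)
      then show False using y that(1) by simp
    qed
  qed
  have va: "valid a" using P unfolding valid_def a_def by auto
  have CovA: "Cov c a (Nseq r) (Nseq (Suc r)) = Cov c (A r) (Nseq r) (Nseq (Suc r))" for r
    by (rule Cov_cong) (simp add: a_def rd)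
  define E where "E B = {x \<in> {0..1::real}. \<forall>p. prime p \<and> B \<le> p \<longrightarrow> \<not> \<bar>x - real_of_int (a p) / real p\<bar> \<le> c / real p}" for B
  have negE: "negligible (E B)" for B
    unfolding negligible_outer_le
  proof (intro allI impI)
    fix e :: real assume e: "e > 0"
    obtain n :: nat where n: "1 / e < real n" using reals_Archimedean2 by blast
    define r where "r = max B n"
    have "1 / e < real (Suc r)" using n unfolding r_def by auto
    then have re: "1 / real (Suc r) \<le> e" using e by (simp add: field_simps)
    have "B \<le> Nseq r" using Nge[of r] unfolding r_def by simp
    have "E B \<subseteq> {0..1} - Cov c a (Nseq r) (Nseq (Suc r))"
    proof
      fix x assume x: "x \<in> E B"
      have "x \<notin> Cov c a (Nseq r) (Nseq (Suc r))"
      proof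
        assume "x \<in> Cov c a (Nseq r) (Nseq (Suc r))"
        then obtain p where p: "prime p" "Nseq r \<le> p" "\<bar>x - real_of_int (a p) / real p\<bar> \<le> c / real p"
          unfolding Cov_def by blast
        have "B \<le> p" using p(2) \<open>B \<le> Nseq r\<close> by linarith
        then show False using x p(1,3) unfolding E_def by blast
      qed
      moreover have "x \<in> {0..1}" using x unfolding E_def by blast
      ultimately show "x \<in> {0..1} - Cov c a (Nseq r) (Nseq (Suc r))" by blast
    qed
    also have "\<dots> \<subseteq> UL (L r)" using P[of r] CovA[of r] by simp
    finally have sub: "E B \<subseteq> UL (L r)" .
    have m: "UL (L r) \<in> sets lebesgue" "UL (L r) \<subseteq> {0..1}" "measure lebesgue (UL (L r)) \<le> lenL (L r)"
      using UL_meas P[of r] by auto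
    have "bounded (UL (L r))" using m(2) bounded_subset[OF compact_imp_bounded[OF compact_Icc[of 0 1]]] by blast
    then have "UL (L r) \<in> lmeasurable" using m(1) by (rule bounded_set_imp_lmeasurable)
    then show "\<exists>T. E B \<subseteq> T \<and> T \<in> lmeasurable \<and> measure lebesgue T \<le> e"
      using sub m(3) P[of r] re by (intro exI[of _ "UL (L r)"]) auto
  qed
  have negU: "negligible (\<Union>B. E B)" by (rule negligible_Union_nat[OF negE])
  have sub: "{x. \<not> (x \<in> {0..1} \<longrightarrow> infinite {p :: nat. prime p \<and> \<bar>x - real_of_int (a p) / real p\<bar> \<le> c / real p})}
      \<subseteq> (\<Union>B. E B)"
  proof
    fix x assume "x \<in> {x. \<not> (x \<in> {0..1} \<longrightarrow> infinite {p :: nat. prime p \<and> \<bar>x - real_of_int (a p) / real p\<bar> \<le> c / real p})}"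
    then have x: "x \<in> {0..1}" "finite {p :: nat. prime p \<and> \<bar>x - real_of_int (a p) / real p\<bar> \<le> c / real p}" by auto
    then obtain B where "{p :: nat. prime p \<and> \<bar>x - real_of_int (a p) / real p\<bar> \<le> c / real p} \<subseteq> {..<B}"
      using finite_nat_bounded by blast
    then have "\<forall>p. prime p \<and> B \<le> p \<longrightarrow> \<not> \<bar>x - real_of_int (a p) / real p\<bar> \<le> c / real p"
      by (auto simp: subset_iff not_less)
    then have "x \<in> E B" using x(1) unfolding E_def by blast
    then show "x \<in> (\<Union>B. E B)" by blast
  qed
  have "AE x in lebesgue. x \<in> {0..1} \<longrightarrow> infinite {p :: nat. prime p \<and> \<bar>x - real_of_int (a p) / real p\<bar> \<le> c / real p}"
    unfolding eventually_ae_filter_negligible using negU sub by blast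
  then have "AE x in lborel. x \<in> {0..1} \<longrightarrow> infinite {p :: nat. prime p \<and> \<bar>x - real_of_int (a p) / real p\<bar> \<le> c / real p}"
    by (simp add: AE_completion_iff)
  then show ?thesis using va unfolding valid_def by blast
qed

end
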